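(* Let $A$ be a dg algebra over a commutative ring $k$ and $x,x'$ Maurer–Cartan elements of $A$. Then $x$ and $x'$ are homotopy gauge equivalent if and only if they are $K_2$-homotopic.
   Context: A Maurer–Cartan element is $x\in A^1$ with $dx+x^2=0$. For such $x$, $A^{[x]}$ is the right dg $A$-module with underlying graded module $A$ and differential $a\mapsto da+xa$; $x,x'$ are homotopy gauge equivalent if $A^{[x]}$ and $A^{[x']}$ are homotopy equivalent right dg $A$-modules, i.e. there are closed degree-0 module maps in both directions whose composites are cohomologous to the identities in the dg Hom complexes. Let $I$ be the singular simplicial set of $[0,1]$. Let $K_2\subset I$ be the simplicial subset generated by the two affine singular 2-simplices $\Delta^2\to[0,1]$ sending the vertices $(x_0,x_1,x_2)$ to $(0,1,0)$ and to $(1,0,1)$ respectively; it has two nondegenerate simplices in each of dimensions 0, 1, 2. $K_2^*$ is its normalized cochain algebra with values in $k$ with the Alexander–Whitney product, and $ev_0,ev_1:K_2^*\to k$ are restriction to the 0-simplices $0$ and $1$. $x,x'$ are $K_2$-homotopic if there is a Maurer–Cartan element $X\in A\otimes K_2^*$ with $(\mathrm{id}_A\otimes ev_0)(X)=x$ and $(\mathrm{id}_A\otimes ev_1)(X)=x'$. *)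

theory Defs
  imports "HOL-Homology.Simplices"
begin

definition sgn_mult :: "int \<Rightarrow> 'a::ring \<Rightarrow> 'a" where
  "sgn_mult n a = (if even n then a else - a)"

definition dg_algebra ::
  "('k::comm_ring_1 \<Rightarrow> 'a::{ring,monoid_mult} \<Rightarrow> 'a) \<Rightarrow> (int \<Rightarrow> 'a set) \<Rightarrow> ('a \<Rightarrow> 'a) \<Rightarrow> bool" where
  "dg_algebra smult gr d \<longleftrightarrow>
     \<comment> \<open>k-module and k-algebra structure\<close>
     (\<forall>c a b. smult c (a + b) = smult c a + smult c b) \<and>
     (\<forall>c c' a. smult (c + c') a = smult c a + smult c' a) \<and>
     (\<forall>c c' a. smult (c * c') a = smult c (smult c' a)) \<and>
     (\<forall>a. smult 1 a = a) \<and>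
     (\<forall>c a b. smult c (a * b) = smult c a * b \<and> smult c (a * b) = a * smult c b) \<and>
     \<comment> \<open>grading\<close>
     (\<forall>n. 0 \<in> gr n \<and> (\<forall>a\<in>gr n. \<forall>b\<in>gr n. a + b \<in> gr n) \<and> (\<forall>a\<in>gr n. - a \<in> gr n)) \<and>
     (\<forall>n c a. a \<in> gr n \<longrightarrow> smult c a \<in> gr n) \<and>
     (\<forall>a. \<exists>!cpt :: int \<Rightarrow> 'a. finite {n. cpt n \<noteq> 0} \<and> (\<forall>n. cpt n \<in> gr n) \<and>
            a = (\<Sum>n\<in>{n. cpt n \<noteq> 0}. cpt n)) \<and>
     (\<forall>m n a b. a \<in> gr m \<longrightarrow> b \<in> gr n \<longrightarrow> a * b \<in> gr (m + n)) \<and>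
     1 \<in> gr 0 \<and>
     \<comment> \<open>differential\<close>
     (\<forall>a b. d (a + b) = d a + d b) \<and>
     (\<forall>c a. d (smult c a) = smult c (d a)) \<and>
     (\<forall>n a. a \<in> gr n \<longrightarrow> d a \<in> gr (n + 1)) \<and>
     (\<forall>a. d (d a) = 0) \<and>
     (\<forall>n a b. a \<in> gr n \<longrightarrow> d (a * b) = d a * b + sgn_mult n (a * d b))"

definition maurer_cartan :: "(int \<Rightarrow> 'a::{ring,monoid_mult} set) \<Rightarrow> ('a \<Rightarrow> 'a) \<Rightarrow> 'a \<Rightarrow> bool" where
  "maurer_cartan gr d x \<longleftrightarrow> x \<in> gr 1 \<and> d x + x * x = 0"

definition twisted_diff :: "('a::{ring,monoid_mult} \<Rightarrow> 'a) \<Rightarrow> 'a \<Rightarrow> 'a \<Rightarrow> 'a" where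
  "twisted_diff d x a = d a + x * a"

definition module_map_deg ::
  "('k::comm_ring_1 \<Rightarrow> 'a::{ring,monoid_mult} \<Rightarrow> 'a) \<Rightarrow> (int \<Rightarrow> 'a set) \<Rightarrow> int \<Rightarrow> ('a \<Rightarrow> 'a) \<Rightarrow> bool" where
  "module_map_deg smult gr n f \<longleftrightarrow>
     (\<forall>a b. f (a + b) = f a + f b) \<and>
     (\<forall>c a. f (smult c a) = smult c (f a)) \<and>
     (\<forall>a b. f (a * b) = f a * b) \<and>
     (\<forall>m a. a \<in> gr m \<longrightarrow> f a \<in> gr (m + n))"

definition closed_module_map ::
  "('k::comm_ring_1 \<Rightarrow> 'a::{ring,monoid_mult} \<Rightarrow> 'a) \<Rightarrow> (int \<Rightarrow> 'a set) \<Rightarrow> ('a \<Rightarrow> 'a) \<Rightarrow> 'a \<Rightarrow> 'a \<Rightarrow> ('a \<Rightarrow> 'a) \<Rightarrow> bool" where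
  "closed_module_map smult gr d x x' f \<longleftrightarrow>
     module_map_deg smult gr 0 f \<and> (\<forall>a. twisted_diff d x' (f a) = f (twisted_diff d x a))"

text \<open>An endomorphism e of degree 0 of A^[x] is cohomologous to the identity if
e - id is the differential of a degree -1 element h of the Hom complex, i.e.
e - id = D_x o h - (-1)^(-1) h o D_x = D_x o h + h o D_x.\<close>
definition cohomologous_to_id ::
  "('k::comm_ring_1 \<Rightarrow> 'a::{ring,monoid_mult} \<Rightarrow> 'a) \<Rightarrow> (int \<Rightarrow> 'a set) \<Rightarrow> ('a \<Rightarrow> 'a) \<Rightarrow> 'a \<Rightarrow> ('a \<Rightarrow> 'a) \<Rightarrow> bool" where
  "cohomologous_to_id smult gr d x e \<longleftrightarrow>
     (\<exists>h. module_map_deg smult gr (-1) h \<and>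
          (\<forall>a. e a - a = twisted_diff d x (h a) + h (twisted_diff d x a)))"

definition homotopy_gauge_equiv ::
  "('k::comm_ring_1 \<Rightarrow> 'a::{ring,monoid_mult} \<Rightarrow> 'a) \<Rightarrow> (int \<Rightarrow> 'a set) \<Rightarrow> ('a \<Rightarrow> 'a) \<Rightarrow> 'a \<Rightarrow> 'a \<Rightarrow> bool" where
  "homotopy_gauge_equiv smult gr d x x' \<longleftrightarrow>
     (\<exists>f g. closed_module_map smult gr d x x' f \<and> closed_module_map smult gr d x' x g \<and>
            cohomologous_to_id smult gr d x (g \<circ> f) \<and> cohomologous_to_id smult gr d x' (f \<circ> g))"

text \<open>Singular simplices of [0,1] are (extensional) maps from standard simplices to real.
For h : [p] \<rightarrow> [n] monotone, the simplicial operator h^* sends an n-simplex s to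
s composed with the affine map Delta^p \<rightarrow> Delta^n sending vertex i to vertex h i.\<close>

definition vertex_affine :: "nat \<Rightarrow> (nat \<Rightarrow> nat) \<Rightarrow> (nat \<Rightarrow> real) \<Rightarrow> nat \<Rightarrow> real" where
  "vertex_affine p h y = (\<lambda>j. \<Sum>i\<le>p. if h i = j then y i else 0)"

definition simp_op :: "nat \<Rightarrow> (nat \<Rightarrow> nat) \<Rightarrow> ((nat \<Rightarrow> real) \<Rightarrow> real) \<Rightarrow> (nat \<Rightarrow> real) \<Rightarrow> real" where
  "simp_op p h s = (\<lambda>y\<in>standard_simplex p. s (vertex_affine p h y))"

definition degeneracy :: "nat \<Rightarrow> nat \<Rightarrow> ((nat \<Rightarrow> real) \<Rightarrow> real) \<Rightarrow> (nat \<Rightarrow> real) \<Rightarrow> real" where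
  "degeneracy n j s = simp_op (Suc n) (\<lambda>i. if i \<le> j then i else i - 1) s"

definition front_face :: "nat \<Rightarrow> ((nat \<Rightarrow> real) \<Rightarrow> real) \<Rightarrow> (nat \<Rightarrow> real) \<Rightarrow> real" where
  "front_face p s = simp_op p (\<lambda>i. i) s"

definition back_face :: "nat \<Rightarrow> nat \<Rightarrow> ((nat \<Rightarrow> real) \<Rightarrow> real) \<Rightarrow> (nat \<Rightarrow> real) \<Rightarrow> real" where
  "back_face n q s = simp_op q (\<lambda>i. i + (n - q)) s"

text \<open>The two affine 2-simplices with vertex values (0,1,0) and (1,0,1).\<close>
definition sigma010 :: "(nat \<Rightarrow> real) \<Rightarrow> real" where
  "sigma010 = (\<lambda>y\<in>standard_simplex 2. y 1)"

definition sigma101 :: "(nat \<Rightarrow> real) \<Rightarrow> real" where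
  "sigma101 = (\<lambda>y\<in>standard_simplex 2. y 0 + y 2)"

definition vertex_at :: "real \<Rightarrow> (nat \<Rightarrow> real) \<Rightarrow> real" where
  "vertex_at t = (\<lambda>y\<in>standard_simplex 0. t)"

inductive_set K2 :: "(nat \<times> ((nat \<Rightarrow> real) \<Rightarrow> real)) set" where
  gen1: "(2, sigma010) \<in> K2"
| gen2: "(2, sigma101) \<in> K2"
| face: "(Suc n, s) \<in> K2 \<Longrightarrow> k \<le> Suc n \<Longrightarrow> (n, singular_face (Suc n) k s) \<in> K2"
| degen: "(n, s) \<in> K2 \<Longrightarrow> j \<le> n \<Longrightarrow> (Suc n, degeneracy n j s) \<in> K2"

definition degenerate_simplex :: "nat \<Rightarrow> ((nat \<Rightarrow> real) \<Rightarrow> real) \<Rightarrow> bool" where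
  "degenerate_simplex n s \<longleftrightarrow> (\<exists>m j t. n = Suc m \<and> j \<le> m \<and> s = degeneracy m j t)"

definition nondeg_K2 :: "nat \<Rightarrow> ((nat \<Rightarrow> real) \<Rightarrow> real) \<Rightarrow> bool" where
  "nondeg_K2 n s \<longleftrightarrow> (n, s) \<in> K2 \<and> \<not> degenerate_simplex n s"

text \<open>Since the normalized cochains K_2^* form a finitely generated free k-module (basis: the
indicator cochains of the nondegenerate simplices), A \<otimes>_k K_2^* is identified with normalized
A-valued cochains: an element of total degree m is a family X n s \<in> A^(m-n) indexed by the
n-simplices s of K_2, vanishing on degenerate simplices (X n s = a corresponds to
the sum of a \<otimes> [s]). We use the cochain differential
(\<delta>\<phi>)(s) = \<Sum>_{i=0}^{n} (-1)^i \<phi>(d_i s), the Alexander-Whitney product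
(f \<union> g)(s) = f(front_p s) g(back_q s), and the Koszul conventions
d(a \<otimes> f) = da \<otimes> f + (-1)^|a| a \<otimes> \<delta>f and (a \<otimes> f)(b \<otimes> g) = (-1)^(|f||b|) ab \<otimes> (f \<union> g).\<close>

definition K2_cochain_deg1 :: "(int \<Rightarrow> 'a::{ring,monoid_mult} set) \<Rightarrow> (nat \<Rightarrow> ((nat \<Rightarrow> real) \<Rightarrow> real) \<Rightarrow> 'a) \<Rightarrow> bool" where
  "K2_cochain_deg1 gr X \<longleftrightarrow>
     (\<forall>n s. X n s \<in> gr (1 - int n)) \<and> (\<forall>n s. \<not> nondeg_K2 n s \<longrightarrow> X n s = 0)"

text \<open>Component (dimension n, simplex s) of D X for X of total degree 1: the A-coefficient
X (n-1) of cochain degree n-1 has A-degree 1-(n-1) = 2-n, hence the sign (-1)^n.\<close>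
definition tensor_diff_deg1 :: "('a::{ring,monoid_mult} \<Rightarrow> 'a) \<Rightarrow> (nat \<Rightarrow> ((nat \<Rightarrow> real) \<Rightarrow> real) \<Rightarrow> 'a)
     \<Rightarrow> nat \<Rightarrow> ((nat \<Rightarrow> real) \<Rightarrow> real) \<Rightarrow> 'a" where
  "tensor_diff_deg1 d X n s =
     d (X n s) +
     (case n of 0 \<Rightarrow> 0
      | Suc m \<Rightarrow> sgn_mult (int n) (\<Sum>i\<le>n. sgn_mult (int i) (X m (singular_face n i s))))"

text \<open>Component (dimension n, simplex s) of X * X: terms with cochain degrees p, q = n - p;
the A-coefficient of the second factor has degree 1 - q, giving sign (-1)^(p(1-q)).\<close>
definition tensor_square_deg1 :: "(nat \<Rightarrow> ((nat \<Rightarrow> real) \<Rightarrow> real) \<Rightarrow> 'a::{ring,monoid_mult})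
     \<Rightarrow> nat \<Rightarrow> ((nat \<Rightarrow> real) \<Rightarrow> real) \<Rightarrow> 'a" where
  "tensor_square_deg1 X n s =
     (\<Sum>p\<le>n. sgn_mult (int p * (1 - int (n - p)))
                (X p (front_face p s) * X (n - p) (back_face n (n - p) s)))"

definition K2_maurer_cartan :: "(int \<Rightarrow> 'a::{ring,monoid_mult} set) \<Rightarrow> ('a \<Rightarrow> 'a)
     \<Rightarrow> (nat \<Rightarrow> ((nat \<Rightarrow> real) \<Rightarrow> real) \<Rightarrow> 'a) \<Rightarrow> bool" where
  "K2_maurer_cartan gr d X \<longleftrightarrow>
     K2_cochain_deg1 gr X \<and>
     (\<forall>n s. (n, s) \<in> K2 \<longrightarrow> tensor_diff_deg1 d X n s + tensor_square_deg1 X n s = 0)"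

definition K2_homotopic :: "(int \<Rightarrow> 'a::{ring,monoid_mult} set) \<Rightarrow> ('a \<Rightarrow> 'a) \<Rightarrow> 'a \<Rightarrow> 'a \<Rightarrow> bool" where
  "K2_homotopic gr d x x' \<longleftrightarrow>
     (\<exists>X. K2_maurer_cartan gr d X \<and> X 0 (vertex_at 0) = x \<and> X 0 (vertex_at 1) = x')"

end

theory Submission
  imports Defs
begin


definition aff :: "nat \<Rightarrow> (nat \<Rightarrow> real) \<Rightarrow> (nat \<Rightarrow> real) \<Rightarrow> real" where
  "aff n c = (\<lambda>y\<in>standard_simplex n. \<Sum>i\<le>n. c i * y i)"

lemma aff_eq_iff: "aff n c = aff n c' \<longleftrightarrow> (\<forall>i\<le>n. c i = c' i)"
proof
  assume h: "aff n c = aff n c'"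
  show "\<forall>i\<le>n. c i = c' i"
  proof (intro allI impI)
    fix i assume i: "i \<le> n"
    let ?e = "(\<lambda>j. if j = i then 1 else 0) :: nat \<Rightarrow> real"
    have "aff n c ?e = aff n c' ?e" using h by simp
    then show "c i = c' i" using i by (simp add: aff_def if_distrib cong: if_cong)
  qed
next
  assume "\<forall>i\<le>n. c i = c' i"
  then show "aff n c = aff n c'" unfolding aff_def by (intro restrict_ext sum.cong) auto
qed

lemma vertex_affine_sum:
  assumes "\<forall>i\<le>p. h i \<le> n"
  shows "(\<Sum>j\<le>n. c j * vertex_affine p h y j) = (\<Sum>i\<le>p. c (h i) * y i)"
proof -
  have "(\<Sum>j\<le>n. c j * vertex_affine p h y j) = (\<Sum>j\<le>n. \<Sum>i\<le>p. if h i = j then c j * y i else 0)"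
    by (simp add: vertex_affine_def sum_distrib_left if_distrib cong: if_cong)
  also have "\<dots> = (\<Sum>i\<le>p. \<Sum>j\<le>n. if h i = j then c j * y i else 0)" by (rule sum.swap)
  also have "\<dots> = (\<Sum>i\<le>p. c (h i) * y i)"
    using assms by (intro sum.cong) (auto simp: sum.delta')
  finally show ?thesis .
qed

lemma vertex_affine_in:
  assumes "\<forall>i\<le>p. h i \<le> n" "y \<in> standard_simplex p"
  shows "vertex_affine p h y \<in> standard_simplex n"
proof -
  have y: "\<And>i. 0 \<le> y i" "\<And>i. y i \<le> 1" "\<And>i. i > p \<Longrightarrow> y i = 0" "(\<Sum>i\<le>p. y i) = 1"
    using assms(2) by (auto simp: standard_simplex_def)
  have nn: "0 \<le> vertex_affine p h y j" for j
    unfolding vertex_affine_def using y by (intro sum_nonneg) auto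
  have le: "vertex_affine p h y j \<le> 1" for j
  proof -
    have "vertex_affine p h y j \<le> (\<Sum>i\<le>p. y i)"
      unfolding vertex_affine_def using y by (intro sum_mono) auto
    then show ?thesis using y by simp
  qed
  have z: "vertex_affine p h y j = 0" if "j > n" for j
    unfolding vertex_affine_def using assms(1) that by (intro sum.neutral) force
  have "(\<Sum>j\<le>n. vertex_affine p h y j) = (\<Sum>j\<le>n. (\<lambda>_. 1) j * vertex_affine p h y j)" by simp
  also have "\<dots> = (\<Sum>i\<le>p. y i)" using vertex_affine_sum[OF assms(1), of "\<lambda>_. 1" y] by simp
  finally show ?thesis using nn le z y by (auto simp: standard_simplex_def)
qed

lemma simp_op_aff:
  assumes "\<forall>i\<le>p. h i \<le> n"
  shows "simp_op p h (aff n c) = aff p (c \<circ> h)"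
  unfolding simp_op_def aff_def
  using vertex_affine_in[OF assms] vertex_affine_sum[OF assms]
  by (intro restrict_ext) auto

definition dl :: "nat \<Rightarrow> nat \<Rightarrow> nat" where "dl k i = (if i < k then i else Suc i)"

lemma simplical_face_va:
  assumes "k \<le> Suc n" "y \<in> standard_simplex n"
  shows "simplical_face k y = vertex_affine n (dl k) y"
proof
  fix j
  have z: "\<And>i. i > n \<Longrightarrow> y i = 0" using assms(2) by (auto simp: standard_simplex_def)
  show "simplical_face k y j = vertex_affine n (dl k) y j"
  proof (cases "j < k")
    case True
    then have "j \<le> n" using assms by auto
    have "vertex_affine n (dl k) y j = (\<Sum>i\<le>n. if i = j then y i else 0)"
      unfolding vertex_affine_def using True by (intro sum.cong) (auto simp: dl_def)
    also have "\<dots> = y j" using \<open>j \<le> n\<close> by (simp add: sum.delta')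
    finally show ?thesis using True by (simp add: simplical_face_def)
  next
    case False
    show ?thesis
    proof (cases "j = k")
      case True
      then show ?thesis
        by (simp add: simplical_face_def vertex_affine_def dl_def) (intro sum.neutral; auto)
    next
      case jk: False
      with False have jk2: "j > k" by simp
      have "vertex_affine n (dl k) y j = (\<Sum>i\<le>n. if i = j - 1 then y i else 0)"
        unfolding vertex_affine_def using jk2 by (intro sum.cong) (auto simp: dl_def)
      also have "\<dots> = y (j - 1)" using z[of "j-1"] by (auto simp: sum.delta')
      finally show ?thesis using False jk by (simp add: simplical_face_def)
    qed
  qed
qed



lemma dl_le: "k \<le> Suc n \<Longrightarrow> \<forall>i\<le>n. dl k i \<le> Suc n"
  by (auto simp: dl_def)

lemma face_aff:
  assumes "k \<le> Suc n"
  shows "singular_face (Suc n) k (aff (Suc n) c) = aff n (c \<circ> dl k)"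
  unfolding singular_face_def aff_def[of n]
proof (simp only: diff_Suc_Suc diff_zero, intro restrict_ext)
  fix y assume y': "y \<in> standard_simplex n"
  have sf: "simplical_face k y \<in> standard_simplex (Suc n)"
    using simplical_face_in_standard_simplex[of "Suc n" k y] assms y' by simp
  show "(aff (Suc n) c \<circ> simplical_face k) y = (\<Sum>i\<le>n. (c \<circ> dl k) i * y i)"
    using sf y' simplical_face_va[OF assms y'] vertex_affine_sum[OF dl_le[OF assms], of c y]
    by (simp add: aff_def)
qed

lemma face_aff': "singular_face n k (aff n c) = aff (n - 1) (c \<circ> dl k)" if "k \<le> n" "n > 0"
  using face_aff[of k "n - 1" c] that by simp

lemma front_aff: "p \<le> n \<Longrightarrow> front_face p (aff n c) = aff p c"
  unfolding front_face_def by (subst simp_op_aff) (auto simp: o_def)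

lemma back_aff: "q \<le> n \<Longrightarrow> back_face n q (aff n c) = aff q (\<lambda>i. c (i + (n - q)))"
  unfolding back_face_def by (subst simp_op_aff) (auto simp: o_def)

definition sg :: "nat \<Rightarrow> nat \<Rightarrow> nat" where "sg j i = (if i \<le> j then i else i - 1)"

lemma degen_aff: "j \<le> n \<Longrightarrow> degeneracy n j (aff n c) = aff (Suc n) (c \<circ> sg j)"
  unfolding degeneracy_def sg_def[abs_def] by (subst simp_op_aff) auto

definition edge :: "real \<Rightarrow> real \<Rightarrow> (nat \<Rightarrow> real) \<Rightarrow> real" where
  "edge a b = aff 1 (\<lambda>i. if i = 0 then a else b)"
definition tri :: "real \<Rightarrow> real \<Rightarrow> real \<Rightarrow> (nat \<Rightarrow> real) \<Rightarrow> real" where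
  "tri a b e = aff 2 (\<lambda>i. if i = 0 then a else if i = 1 then b else e)"

lemma aff0: "aff 0 c = vertex_at (c 0)"
  unfolding aff_def vertex_at_def by (intro restrict_ext) (auto simp: standard_simplex_def)

lemma aff1: "aff 1 c = edge (c 0) (c 1)"
  unfolding edge_def aff_eq_iff by (auto simp: le_Suc_eq)

lemma aff2: "aff 2 c = tri (c 0) (c 1) (c 2)"
  unfolding tri_def aff_eq_iff by (auto simp: le_Suc_eq numeral_2_eq_2)

lemma vertex_at_eq: "vertex_at a = vertex_at b \<longleftrightarrow> a = b"
  using aff_eq_iff[of 0 "\<lambda>_. a" "\<lambda>_. b"] by (simp add: aff0)

lemma edge_eq: "edge a b = edge a' b' \<longleftrightarrow> a = a' \<and> b = b'"
  unfolding edge_def aff_eq_iff by (auto simp: le_Suc_eq)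

lemma tri_eq: "tri a b e = tri a' b' e' \<longleftrightarrow> a = a' \<and> b = b' \<and> e = e'"
  unfolding tri_def aff_eq_iff by (auto simp: le_Suc_eq numeral_2_eq_2)

lemma sigma010_tri: "sigma010 = tri 0 1 0"
  unfolding sigma010_def tri_def aff_def by (intro restrict_ext) (simp add: numeral_2_eq_2)

lemma sigma101_tri: "sigma101 = tri 1 0 1"
  unfolding sigma101_def tri_def aff_def by (intro restrict_ext) (simp add: numeral_2_eq_2)



definition binw :: "(nat \<Rightarrow> real) \<Rightarrow> bool" where "binw c \<longleftrightarrow> (\<forall>i. c i = 0 \<or> c i = 1)"

definition good :: "nat \<Rightarrow> (nat \<Rightarrow> real) \<Rightarrow> bool" where
  "good n c \<longleftrightarrow> \<not> (\<exists>i j k l. i < j \<and> j < k \<and> k < l \<and> l \<le> n \<and> c i \<noteq> c j \<and> c j \<noteq> c k \<and> c k \<noteq> c l)"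

lemma good_comp:
  assumes g: "good n c" and mono: "\<And>i j. i \<le> j \<Longrightarrow> h i \<le> h j" and rng: "\<And>i. i \<le> p \<Longrightarrow> h i \<le> n"
  shows "good p (c \<circ> h)"
  unfolding good_def
proof
  assume "\<exists>i j k l. i < j \<and> j < k \<and> k < l \<and> l \<le> p \<and> (c \<circ> h) i \<noteq> (c \<circ> h) j \<and> (c \<circ> h) j \<noteq> (c \<circ> h) k \<and> (c \<circ> h) k \<noteq> (c \<circ> h) l"
  then obtain i j k l where h: "i < j" "j < k" "k < l" "l \<le> p" "c (h i) \<noteq> c (h j)" "c (h j) \<noteq> c (h k)" "c (h k) \<noteq> c (h l)"
    by auto
  have "h i < h j" using mono[of i j] h by (metis le_neq_implies_less less_imp_le)
  moreover have "h j < h k" using mono[of j k] h by (metis le_neq_implies_less less_imp_le)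
  moreover have "h k < h l" using mono[of k l] h by (metis le_neq_implies_less less_imp_le)
  moreover have "h l \<le> n" using rng h by simp
  ultimately show False using g h unfolding good_def by blast
qed

lemma aff1': "aff (Suc 0) c = edge (c 0) (c 1)" using aff1 by simp
lemma aff2': "aff (Suc (Suc 0)) c = tri (c 0) (c 1) (c 2)" using aff2 by (simp add: numeral_2_eq_2)
lemma aff2'': "aff (Suc 1) c = tri (c 0) (c 1) (c 2)" using aff2 by (simp add: numeral_2_eq_2)

lemma K2_sub: "(n, s) \<in> K2 \<Longrightarrow> \<exists>c. s = aff n c \<and> binw c \<and> good n c"
proof (induction rule: K2.induct)
  case gen1
  show ?case
    by (rule exI[of _ "\<lambda>i. if i = 0 then 0 else if i = 1 then 1 else 0"])
       (auto simp: sigma010_tri tri_def binw_def good_def)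
next
  case gen2
  show ?case
    by (rule exI[of _ "\<lambda>i. if i = 0 then 1 else if i = 1 then 0 else 1"])
       (auto simp: sigma101_tri tri_def binw_def good_def)
next
  case (face n s k)
  then obtain c where c: "s = aff (Suc n) c" "binw c" "good (Suc n) c" by blast
  show ?case
  proof (intro exI conjI)
    show "singular_face (Suc n) k s = aff n (c \<circ> dl k)" using c face by (simp add: face_aff)
    show "binw (c \<circ> dl k)" using c by (simp add: binw_def)
    show "good n (c \<circ> dl k)" using face(2) by (intro good_comp[OF c(3)]) (auto simp: dl_def)
  qed
next
  case (degen n s j)
  then obtain c where c: "s = aff n c" "binw c" "good n c" by blast
  show ?case
  proof (intro exI conjI)
    show "degeneracy n j s = aff (Suc n) (c \<circ> sg j)" using c degen by (simp add: degen_aff)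
    show "binw (c \<circ> sg j)" using c by (simp add: binw_def)
    show "good (Suc n) (c \<circ> sg j)" using degen(2) by (intro good_comp[OF c(3)]) (auto simp: sg_def)
  qed
qed

lemma degen_val:
  assumes "aff (Suc m) c = degeneracy m j t" "j \<le> m"
  shows "c j = c (Suc j)"
proof -
  let ?e = "\<lambda>i. (\<lambda>l. if l = i then 1 else 0) :: nat \<Rightarrow> real"
  define h where "h = (\<lambda>i::nat. if i \<le> j then i else i - 1)"
  have vk: "vertex_affine (Suc m) h (?e k) = ?e (h k)" if "k \<le> Suc m" for k
  proof
    fix l
    have "vertex_affine (Suc m) h (?e k) l = (\<Sum>i\<le>Suc m. if i = k then (if h k = l then 1 else 0) else 0)"
      unfolding vertex_affine_def by (intro sum.cong) auto
    also have "\<dots> = (if h k = l then 1 else 0)" using that by (simp add: sum.delta')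
    finally show "vertex_affine (Suc m) h (?e k) l = ?e (h k) l" by auto
  qed
  have va: "vertex_affine (Suc m) h (?e j) = vertex_affine (Suc m) h (?e (Suc j))"
    using vk[of j] vk[of "Suc j"] assms(2) by (simp add: h_def)
  have "aff (Suc m) c (?e j) = aff (Suc m) c (?e (Suc j))"
    using assms va by (simp add: degeneracy_def simp_op_def h_def)
  then show ?thesis using assms(2) by (simp add: aff_def if_distrib cong: if_cong)
qed

lemma edge_nondeg: "a \<noteq> b \<Longrightarrow> \<not> degenerate_simplex 1 (edge a b)"
  unfolding degenerate_simplex_def edge_def
  by (auto dest!: degen_val)

lemma tri_nondeg: "a \<noteq> b \<Longrightarrow> b \<noteq> e \<Longrightarrow> \<not> degenerate_simplex 2 (tri a b e)"
  unfolding degenerate_simplex_def tri_def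
  by (auto simp: numeral_2_eq_2 le_Suc_eq split: if_splits dest!: degen_val)

lemma vertex_nondeg: "\<not> degenerate_simplex 0 s"
  unfolding degenerate_simplex_def by auto

lemma edge_deg: "degenerate_simplex 1 (edge a a)"
proof -
  have "degeneracy 0 0 (aff 0 (\<lambda>_. a)) = aff 1 ((\<lambda>_. a) \<circ> sg 0)" by (simp add: degen_aff)
  then have "edge a a = degeneracy 0 0 (aff 0 (\<lambda>_. a))" by (simp add: aff1')
  then show ?thesis unfolding degenerate_simplex_def by auto
qed

lemma K2_tri010: "(2, tri 0 1 0) \<in> K2" using K2.gen1 by (simp add: sigma010_tri)
lemma K2_tri101: "(2, tri 1 0 1) \<in> K2" using K2.gen2 by (simp add: sigma101_tri)

lemma tri_aff: "tri a b e = aff (Suc 1) (\<lambda>i. if i = 0 then a else if i = 1 then b else e)"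
  by (simp add: tri_def numeral_2_eq_2)

lemma K2_edge01: "(1, edge 0 1) \<in> K2"
proof -
  have "(Suc 1, tri 0 1 0) \<in> K2" using K2_tri010 by (simp add: numeral_2_eq_2)
  from K2.face[OF this, of 2] have "(1, singular_face (Suc 1) 2 (tri 0 1 0)) \<in> K2" by simp
  then show ?thesis by (simp add: tri_aff face_aff aff1' dl_def)
qed

lemma K2_edge10: "(1, edge 1 0) \<in> K2"
proof -
  have "(Suc 1, tri 0 1 0) \<in> K2" using K2_tri010 by (simp add: numeral_2_eq_2)
  from K2.face[OF this, of 0] have "(1, singular_face (Suc 1) 0 (tri 0 1 0)) \<in> K2" by simp
  then show ?thesis by (simp add: tri_aff face_aff aff1' dl_def)
qed

lemma edge_aff: "edge a b = aff (Suc 0) (\<lambda>i. if i = 0 then a else b)"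
  by (simp add: edge_def)

lemma K2_v0: "(0, vertex_at 0) \<in> K2"
proof -
  have "(Suc 0, edge 0 1) \<in> K2" using K2_edge01 by simp
  from K2.face[OF this, of 1] have "(0, singular_face (Suc 0) 1 (edge 0 1)) \<in> K2" by simp
  then show ?thesis by (simp add: edge_aff face_aff aff0 dl_def)
qed

lemma K2_v1: "(0, vertex_at 1) \<in> K2"
proof -
  have "(Suc 0, edge 0 1) \<in> K2" using K2_edge01 by simp
  from K2.face[OF this, of 0] have "(0, singular_face (Suc 0) 0 (edge 0 1)) \<in> K2" by simp
  then show ?thesis by (simp add: edge_aff face_aff aff0 dl_def)
qed



definition Tw :: "('a::{ring,monoid_mult} \<Rightarrow> 'a) \<Rightarrow> (nat \<Rightarrow> (nat \<Rightarrow> real) \<Rightarrow> 'a) \<Rightarrow> nat \<Rightarrow> (nat \<Rightarrow> real) \<Rightarrow> 'a" where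
  "Tw d Y n c = d (Y n c) +
     (case n of 0 \<Rightarrow> 0 | Suc m \<Rightarrow> sgn_mult (int n) (\<Sum>i\<le>n. sgn_mult (int i) (Y m (c \<circ> dl i)))) +
     (\<Sum>p\<le>n. sgn_mult (int p * (1 - int (n - p))) (Y p c * Y (n - p) (\<lambda>i. c (i + p))))"

lemma MC_aff:
  "tensor_diff_deg1 d X n (aff n c) + tensor_square_deg1 X n (aff n c) = Tw d (\<lambda>m c. X m (aff m c)) n c"
proof -
  have 1: "tensor_diff_deg1 d X n (aff n c) = d (X n (aff n c)) +
     (case n of 0 \<Rightarrow> 0 | Suc m \<Rightarrow> sgn_mult (int n) (\<Sum>i\<le>n. sgn_mult (int i) (X m (aff m (c \<circ> dl i)))))"
    unfolding tensor_diff_deg1_def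
    by (cases n) (auto intro!: sum.cong simp: face_aff)
  have 2: "tensor_square_deg1 X n (aff n c) = (\<Sum>p\<le>n. sgn_mult (int p * (1 - int (n - p))) (X p (aff p c) * X (n - p) (aff (n - p) (\<lambda>i. c (i + p)))))"
    unfolding tensor_square_deg1_def
    by (intro sum.cong) (auto simp: front_aff back_aff)
  show ?thesis unfolding 1 2 Tw_def by simp
qed

definition Xw :: "'a \<Rightarrow> 'a \<Rightarrow> 'a \<Rightarrow> 'a \<Rightarrow> 'a \<Rightarrow> 'a \<Rightarrow> nat \<Rightarrow> (nat \<Rightarrow> real) \<Rightarrow> 'a::{ring,monoid_mult}" where
  "Xw x x' a01 a10 b010 b101 m c =
    (if m = 0 then (if c 0 = 0 then x else if c 0 = 1 then x' else 0)
     else if m = 1 then (if c 0 = 0 \<and> c 1 = 1 then a01 else if c 0 = 1 \<and> c 1 = 0 then a10 else 0)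
     else if m = 2 then (if c 0 = 0 \<and> c 1 = 1 \<and> c 2 = 0 then b010
                         else if c 0 = 1 \<and> c 1 = 0 \<and> c 2 = 1 then b101 else 0)
     else 0)"

definition XX :: "'a \<Rightarrow> 'a \<Rightarrow> 'a \<Rightarrow> 'a \<Rightarrow> 'a \<Rightarrow> 'a \<Rightarrow> nat \<Rightarrow> ((nat \<Rightarrow> real) \<Rightarrow> real) \<Rightarrow> 'a::{ring,monoid_mult}" where
  "XX x x' a01 a10 b010 b101 m s =
    (if m = 0 then (if s = vertex_at 0 then x else if s = vertex_at 1 then x' else 0)
     else if m = 1 then (if s = edge 0 1 then a01 else if s = edge 1 0 then a10 else 0)
     else if m = 2 then (if s = tri 0 1 0 then b010 else if s = tri 1 0 1 then b101 else 0)
     else 0)"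

lemma XX_aff: "(\<lambda>m c. XX x x' a01 a10 b010 b101 m (aff m c)) = Xw x x' a01 a10 b010 b101"
proof (intro ext)
  fix m c
  show "XX x x' a01 a10 b010 b101 m (aff m c) = Xw x x' a01 a10 b010 b101 m c"
  proof -
    consider "m = 0" | "m = 1" | "m = 2" | "m \<noteq> 0 \<and> m \<noteq> 1 \<and> m \<noteq> 2" by blast
    then show ?thesis
    proof cases
      case 1 then show ?thesis by (simp add: XX_def Xw_def aff0 vertex_at_eq)
    next
      case 2 then show ?thesis by (simp add: XX_def Xw_def aff1' edge_eq)
    next
      case 3 then show ?thesis by (simp add: XX_def Xw_def aff2 tri_eq)
    next
      case 4 then show ?thesis by (simp add: XX_def Xw_def)
    qed
  qed
qed

lemma sgn_mult_0[simp]: "sgn_mult n 0 = 0" by (simp add: sgn_mult_def)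

lemma Xw_ge3: "m \<ge> 3 \<Longrightarrow> Xw x x' a01 a10 b010 b101 m c = 0"
  by (simp add: Xw_def)

lemma Tw_big:
  assumes "d 0 = 0" "n \<ge> 5"
  shows "Tw d (Xw x x' a01 a10 b010 b101) n c = 0"
proof -
  obtain m where m: "n = Suc m" "m \<ge> 4" using assms by (cases n) auto
  have "(\<Sum>p\<le>n. sgn_mult (int p * (1 - int (n - p))) (Xw x x' a01 a10 b010 b101 p c * Xw x x' a01 a10 b010 b101 (n - p) (\<lambda>i. c (i + p)))) = 0"
  proof (intro sum.neutral ballI)
    fix p assume "p \<in> {..n}"
    show "sgn_mult (int p * (1 - int (n - p))) (Xw x x' a01 a10 b010 b101 p c * Xw x x' a01 a10 b010 b101 (n - p) (\<lambda>i. c (i + p))) = 0"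
    proof (cases "p \<ge> 3")
      case True then show ?thesis by (simp add: Xw_ge3)
    next
      case False then have "n - p \<ge> 3" using assms by simp
      then show ?thesis by (simp add: Xw_ge3)
    qed
  qed
  moreover have "Xw x x' a01 a10 b010 b101 n c = 0" using assms by (simp add: Xw_ge3)
  moreover have "\<And>i. Xw x x' a01 a10 b010 b101 m (c \<circ> dl i) = 0" using m by (simp add: Xw_ge3)
  ultimately show ?thesis using assms m by (simp add: Tw_def)
qed

lemma Tw_4:
  assumes "d 0 = 0" "good 4 c"
  shows "Tw d (Xw x x' a01 a10 b010 b101) 4 c = 0"
proof -
  have "(0::nat) < 1 \<and> (1::nat) < 2 \<and> (2::nat) < 3 \<and> (3::nat) \<le> 4" by simp
  then have ng: "\<not> (c 0 \<noteq> c 1 \<and> c 1 \<noteq> c 2 \<and> c 2 \<noteq> c 3)"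
    using assms(2) unfolding good_def by blast
  have "(\<Sum>p\<le>4. sgn_mult (int p * (1 - int (4 - p))) (Xw x x' a01 a10 b010 b101 p c * Xw x x' a01 a10 b010 b101 (4 - p) (\<lambda>i. c (i + p)))) = 0"
  proof (intro sum.neutral ballI)
    fix p :: nat assume "p \<in> {..4}"
    show "sgn_mult (int p * (1 - int (4 - p))) (Xw x x' a01 a10 b010 b101 p c * Xw x x' a01 a10 b010 b101 (4 - p) (\<lambda>i. c (i + p))) = 0"
    proof (cases "p = 2")
      case True
      have "Xw x x' a01 a10 b010 b101 2 c * Xw x x' a01 a10 b010 b101 2 (\<lambda>i. c (i + 2)) = 0"
        using ng by (auto simp: Xw_def eval_nat_numeral)
      then show ?thesis using True by simp
    next
      case False
      show ?thesis
      proof (cases "p \<ge> 3")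
        case True then show ?thesis by (simp add: Xw_ge3)
      next
        case F: False then have "4 - p \<ge> 3" using False by simp
        then show ?thesis by (simp add: Xw_ge3)
      qed
    qed
  qed
  moreover have "Xw x x' a01 a10 b010 b101 4 c = 0" by (simp add: Xw_ge3)
  moreover have "\<And>i. Xw x x' a01 a10 b010 b101 3 (c \<circ> dl i) = 0" by (simp add: Xw_ge3)
  ultimately show ?thesis using assms by (simp add: Tw_def eval_nat_numeral)
qed



lemma dvd2_SS: "Suc (Suc 0) dvd Suc (Suc n) \<longleftrightarrow> Suc (Suc 0) dvd n"
  using dvd_add_right_iff[of "Suc (Suc 0)" "Suc (Suc 0)" n] by simp
lemma dvd2_1: "\<not> Suc (Suc 0) dvd Suc 0" by simp

lemma Tw_3:
  assumes d0: "d 0 = 0" and b: "binw c" and g: "good 3 c"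
  shows "Tw d (Xw x x' a01 a10 b010 b101) 3 c = 0"
proof -
  have "(0::nat) < 1 \<and> (1::nat) < 2 \<and> (2::nat) < 3 \<and> (3::nat) \<le> 3" by simp
  then have ng: "\<not> (c 0 \<noteq> c 1 \<and> c 1 \<noteq> c 2 \<and> c 2 \<noteq> c 3)"
    using g unfolding good_def by blast
  have c0: "c 0 = 0 \<or> c 0 = 1" and c1: "c 1 = 0 \<or> c 1 = 1" and c2: "c 2 = 0 \<or> c 2 = 1"
    and c3: "c 3 = 0 \<or> c 3 = 1" using b by (auto simp: binw_def)
  show ?thesis
    using c0 c1 c2 c3 ng d0
    by (elim disjE) (simp_all add: Tw_def Xw_def eval_nat_numeral sgn_mult_def dl_def o_def dvd2_SS)
qed

lemma Tw_012:
  assumes d0: "d 0 = 0" and b: "binw c" and n: "n \<le> 2"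
  and hx: "d x = - (x * x)" and hx': "d x' = - (x' * x')"
  and h01: "d a01 = x' - x - x * a01 + a01 * x'"
  and h10: "d a10 = x - x' - x' * a10 + a10 * x"
  and h010: "d b010 = - a10 - a01 - x * b010 - b010 * x - a01 * a10"
  and h101: "d b101 = - a01 - a10 - x' * b101 - b101 * x' - a10 * a01"
  shows "Tw d (Xw x x' a01 a10 b010 b101) n c = 0"
proof -
  have c0: "c 0 = 0 \<or> c 0 = 1" and c1: "c 1 = 0 \<or> c 1 = 1" and c2: "c 2 = 0 \<or> c 2 = 1"
    using b by (auto simp: binw_def)
  consider "n = 0" | "n = 1" | "n = 2" using n by linarith
  then show ?thesis
  proof cases
    case 1 then show ?thesis using c0
      by (elim disjE) (simp_all add: Tw_def Xw_def sgn_mult_def d0 hx hx')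
  next
    case 2 then show ?thesis using c0 c1
      by (elim disjE) (simp_all add: d0 h01 h10 Tw_def Xw_def eval_nat_numeral sgn_mult_def dl_def o_def dvd2_SS algebra_simps)
  next
    case 3 then show ?thesis using c0 c1 c2
      by (elim disjE) (simp_all add: d0 h010 h101 Tw_def Xw_def eval_nat_numeral sgn_mult_def dl_def o_def dvd2_SS algebra_simps)
  qed
qed

lemma Tw_K2:
  assumes d0: "d 0 = 0" and K: "(n, s) \<in> K2"
  and hx: "d x = - (x * x)" and hx': "d x' = - (x' * x')"
  and h01: "d a01 = x' - x - x * a01 + a01 * x'"
  and h10: "d a10 = x - x' - x' * a10 + a10 * x"
  and h010: "d b010 = - a10 - a01 - x * b010 - b010 * x - a01 * a10"
  and h101: "d b101 = - a01 - a10 - x' * b101 - b101 * x' - a10 * a01"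
  shows "tensor_diff_deg1 d (XX x x' a01 a10 b010 b101) n s + tensor_square_deg1 (XX x x' a01 a10 b010 b101) n s = 0"
proof -
  obtain c where c: "s = aff n c" "binw c" "good n c" using K2_sub[OF K] by blast
  consider "n \<le> 2" | "n = 3" | "n = 4" | "n \<ge> 5" by linarith
  then have "Tw d (Xw x x' a01 a10 b010 b101) n c = 0"
  proof cases
    case 1 then show ?thesis by (rule Tw_012[of d, OF d0 c(2) _ hx hx' h01 h10 h010 h101])
  next
    case 2 then show ?thesis using Tw_3[of d, OF d0 c(2)] c(3) by simp
  next
    case 3 then show ?thesis using Tw_4[of d, OF d0] c(3) by simp
  next
    case 4 then show ?thesis by (rule Tw_big[of d, OF d0])
  qed
  moreover have "tensor_diff_deg1 d (XX x x' a01 a10 b010 b101) n (aff n c) + tensor_square_deg1 (XX x x' a01 a10 b010 b101) n (aff n c)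
     = Tw d (Xw x x' a01 a10 b010 b101) n c"
    unfolding MC_aff XX_aff ..
  ultimately show ?thesis using c(1) by simp
qed

lemma dir1_eqs:
  assumes MC: "\<forall>n s. (n,s) \<in> K2 \<longrightarrow> tensor_diff_deg1 d X n s + tensor_square_deg1 X n s = 0"
  and v0: "X 0 (vertex_at 0) = x" and v1: "X 0 (vertex_at 1) = x'"
  and e00: "X 1 (edge 0 0) = 0" and e11: "X 1 (edge 1 1) = 0"
  shows "d (X 1 (edge 0 1)) = x' - x - x * X 1 (edge 0 1) + X 1 (edge 0 1) * x'"
    and "d (X 1 (edge 1 0)) = x - x' - x' * X 1 (edge 1 0) + X 1 (edge 1 0) * x"
    and "d (X 2 (tri 0 1 0)) = - X 1 (edge 1 0) - X 1 (edge 0 1) - x * X 2 (tri 0 1 0) - X 2 (tri 0 1 0) * x - X 1 (edge 0 1) * X 1 (edge 1 0)"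
    and "d (X 2 (tri 1 0 1)) = - X 1 (edge 0 1) - X 1 (edge 1 0) - x' * X 2 (tri 1 0 1) - X 2 (tri 1 0 1) * x' - X 1 (edge 1 0) * X 1 (edge 0 1)"
proof -
  have T: "Tw d (\<lambda>m c. X m (aff m c)) n c = 0" if "(n, aff n c) \<in> K2" for n c
    using MC that MC_aff[of d X n c] by simp
  have "Tw d (\<lambda>m c. X m (aff m c)) 1 (\<lambda>i. if i = 0 then 0 else 1) = 0"
    by (rule T) (use K2_edge01 in \<open>simp add: aff1' aff2' aff2 aff1\<close>)
  then show "d (X 1 (edge 0 1)) = x' - x - x * X 1 (edge 0 1) + X 1 (edge 0 1) * x'"
    using v0 v1 by (simp add: Tw_def sgn_mult_def dl_def o_def aff0 aff1' algebra_simps)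
  have "Tw d (\<lambda>m c. X m (aff m c)) 1 (\<lambda>i. if i = 0 then 1 else 0) = 0"
    by (rule T) (use K2_edge10 in \<open>simp add: aff1' aff2' aff2 aff1\<close>)
  then show "d (X 1 (edge 1 0)) = x - x' - x' * X 1 (edge 1 0) + X 1 (edge 1 0) * x"
    using v0 v1 by (simp add: Tw_def sgn_mult_def dl_def o_def aff0 aff1' algebra_simps)
  have "Tw d (\<lambda>m c. X m (aff m c)) 2 (\<lambda>i. if i = 0 then 0 else if i = 1 then 1 else 0) = 0"
    by (rule T) (use K2_tri010 in \<open>simp add: aff1' aff2' aff2 aff1\<close>)
  then show "d (X 2 (tri 0 1 0)) = - X 1 (edge 1 0) - X 1 (edge 0 1) - x * X 2 (tri 0 1 0) - X 2 (tri 0 1 0) * x - X 1 (edge 0 1) * X 1 (edge 1 0)"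
    using v0 v1 e00 e11 by (simp add: Tw_def sgn_mult_def dl_def o_def aff0 aff1' aff2 aff2' eval_nat_numeral dvd2_SS algebra_simps) (simp add: eq_neg_iff_add_eq_0 algebra_simps)
  have "Tw d (\<lambda>m c. X m (aff m c)) 2 (\<lambda>i. if i = 0 then 1 else if i = 1 then 0 else 1) = 0"
    by (rule T) (use K2_tri101 in \<open>simp add: aff1' aff2' aff2 aff1\<close>)
  then show "d (X 2 (tri 1 0 1)) = - X 1 (edge 0 1) - X 1 (edge 1 0) - x' * X 2 (tri 1 0 1) - X 2 (tri 1 0 1) * x' - X 1 (edge 1 0) * X 1 (edge 0 1)"
    using v0 v1 e00 e11 by (simp add: Tw_def sgn_mult_def dl_def o_def aff0 aff1' aff2 aff2' eval_nat_numeral dvd2_SS algebra_simps) (simp add: eq_neg_iff_add_eq_0 algebra_simps)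
qed



context
  fixes smult :: "'k::comm_ring_1 \<Rightarrow> 'a::{ring,monoid_mult} \<Rightarrow> 'a"
    and gr :: "int \<Rightarrow> 'a set" and d :: "'a \<Rightarrow> 'a"
  assumes dg: "dg_algebra smult gr d"
begin

lemma d_add: "d (a + b) = d a + d b" using dg by (simp add: dg_algebra_def)
lemma d_zero: "d 0 = 0" using d_add[of 0 0] by simp
lemma d_neg: "d (- a) = - d a"
  using d_add[of a "- a"] d_zero by (simp add: eq_neg_iff_add_eq_0 add.commute)
lemma d_diff: "d (a - b) = d a - d b" using d_add[of a "- b"] d_neg[of b] by simp
lemma leib: "a \<in> gr n \<Longrightarrow> d (a * b) = d a * b + sgn_mult n (a * d b)"
  using dg by (simp add: dg_algebra_def)
lemma gr_one: "1 \<in> gr 0" using dg by (simp add: dg_algebra_def)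
lemma d_one: "d 1 = 0"
  using leib[OF gr_one, of 1] by (simp add: sgn_mult_def)
lemma gr_zero: "0 \<in> gr n" using dg by (simp add: dg_algebra_def)
lemma gr_add: "a \<in> gr n \<Longrightarrow> b \<in> gr n \<Longrightarrow> a + b \<in> gr n" using dg by (simp add: dg_algebra_def)
lemma gr_neg: "a \<in> gr n \<Longrightarrow> - a \<in> gr n" using dg by (simp add: dg_algebra_def)
lemma gr_diff: "a \<in> gr n \<Longrightarrow> b \<in> gr n \<Longrightarrow> a - b \<in> gr n"
  using gr_add[of a n "- b"] gr_neg[of b n] by simp
lemma gr_mult: "a \<in> gr m \<Longrightarrow> b \<in> gr n \<Longrightarrow> a * b \<in> gr (m + n)" using dg by (simp add: dg_algebra_def)
lemma smult_right: "smult c (a * b) = a * smult c b"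
proof -
  have h: "\<forall>c a b. smult c (a * b) = smult c a * b \<and> smult c (a * b) = a * smult c b"
    using dg unfolding dg_algebra_def by (elim conjE) assumption
  then show ?thesis by metis
qed

lemma left_mult_map:
  assumes "u \<in> gr n"
  shows "module_map_deg smult gr n (\<lambda>a. u * a)"
  unfolding module_map_deg_def
proof (intro conjI allI impI)
  fix m a assume "a \<in> gr m"
  then show "u * a \<in> gr (m + n)" using gr_mult[OF assms] by (simp add: add.commute)
qed (auto simp: distrib_left smult_right mult.assoc)

end


lemma nondeg_six:
  "nondeg_K2 0 (vertex_at 0)" "nondeg_K2 0 (vertex_at 1)"
  "nondeg_K2 1 (edge 0 1)" "nondeg_K2 1 (edge 1 0)"
  "nondeg_K2 2 (tri 0 1 0)" "nondeg_K2 2 (tri 1 0 1)"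
  unfolding nondeg_K2_def
  using K2_v0 K2_v1 K2_edge01 K2_edge10 K2_tri010 K2_tri101 vertex_nondeg
    edge_nondeg[of 0 1] edge_nondeg[of 1 0] tri_nondeg[of 0 1 0] tri_nondeg[of 1 0 1]
  by simp_all

theorem lemma5p5:
  fixes smult :: "'k::comm_ring_1 \<Rightarrow> 'a::{ring,monoid_mult} \<Rightarrow> 'a"
    and gr :: "int \<Rightarrow> 'a set" and d :: "'a \<Rightarrow> 'a" and x x' :: 'a
  assumes "dg_algebra smult gr d"
    and "maurer_cartan gr d x" and "maurer_cartan gr d x'"
  shows "homotopy_gauge_equiv smult gr d x x' \<longleftrightarrow> K2_homotopic gr d x x'"
proof
  note dg = assms(1)
  have xg: "x \<in> gr 1" and hx: "d x = - (x * x)" using assms(2)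
    by (auto simp: maurer_cartan_def eq_neg_iff_add_eq_0)
  have x'g: "x' \<in> gr 1" and hx': "d x' = - (x' * x')" using assms(3)
    by (auto simp: maurer_cartan_def eq_neg_iff_add_eq_0)
  assume "homotopy_gauge_equiv smult gr d x x'"
  then obtain f g where f: "closed_module_map smult gr d x x' f" and g: "closed_module_map smult gr d x' x g"
    and cf: "cohomologous_to_id smult gr d x (g \<circ> f)" and cg: "cohomologous_to_id smult gr d x' (f \<circ> g)"
    unfolding homotopy_gauge_equiv_def by blast
  obtain h where h: "module_map_deg smult gr (-1) h"
    "\<And>a. (g \<circ> f) a - a = twisted_diff d x (h a) + h (twisted_diff d x a)"
    using cf unfolding cohomologous_to_id_def by blast
  obtain h' where h': "module_map_deg smult gr (-1) h'"
    "\<And>a. (f \<circ> g) a - a = twisted_diff d x' (h' a) + h' (twisted_diff d x' a)"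
    using cg unfolding cohomologous_to_id_def by blast
  define u where "u = f 1"
  define v where "v = g 1"
  define \<eta> where "\<eta> = h 1"
  define \<eta>' where "\<eta>' = h' 1"
  have fm: "\<And>a. f a = u * a" using f unfolding closed_module_map_def module_map_deg_def u_def
    by (metis mult_1_left)
  have gm: "\<And>a. g a = v * a" using g unfolding closed_module_map_def module_map_deg_def v_def
    by (metis mult_1_left)
  have hm: "\<And>a. h a = \<eta> * a" using h(1) unfolding module_map_deg_def \<eta>_def
    by (metis mult_1_left)
  have h'm: "\<And>a. h' a = \<eta>' * a" using h'(1) unfolding module_map_deg_def \<eta>'_def
    by (metis mult_1_left)
  have ug: "u \<in> gr 0" using f gr_one[OF dg] unfolding closed_module_map_def module_map_deg_def u_def
    by fastforce
  have vg: "v \<in> gr 0" using g gr_one[OF dg] unfolding closed_module_map_def module_map_deg_def v_def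
    by fastforce
  have \<eta>g: "\<eta> \<in> gr (-1)" using h(1) gr_one[OF dg] unfolding module_map_deg_def \<eta>_def
    by fastforce
  have \<eta>'g: "\<eta>' \<in> gr (-1)" using h'(1) gr_one[OF dg] unfolding module_map_deg_def \<eta>'_def
    by fastforce
  have du: "d u = u * x - x' * u"
  proof -
    have "twisted_diff d x' (f 1) = f (twisted_diff d x 1)" using f unfolding closed_module_map_def by blast
    then show ?thesis by (simp add: twisted_diff_def fm d_one[OF dg] u_def[symmetric] algebra_simps)
  qed
  have dv: "d v = v * x' - x * v"
  proof -
    have "twisted_diff d x (g 1) = g (twisted_diff d x' 1)" using g unfolding closed_module_map_def by blast
    then show ?thesis by (simp add: twisted_diff_def gm d_one[OF dg] v_def[symmetric] algebra_simps)
  qed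
  have d\<eta>: "d \<eta> = v * u - 1 - x * \<eta> - \<eta> * x"
    using h(2)[of 1] by (simp add: twisted_diff_def fm gm hm d_one[OF dg] algebra_simps)
  have d\<eta>': "d \<eta>' = u * v - 1 - x' * \<eta>' - \<eta>' * x'"
    using h'(2)[of 1] by (simp add: twisted_diff_def fm gm h'm d_one[OF dg] algebra_simps)
  define X where "X = XX x x' (v - 1) (u - 1) (- \<eta>) (- \<eta>')"
  have v01: "vertex_at 0 \<noteq> vertex_at 1" by (simp add: vertex_at_eq)
  have "K2_maurer_cartan gr d X"
    unfolding K2_maurer_cartan_def K2_cochain_deg1_def
  proof (intro conjI allI impI)
    fix n s
    show "X n s \<in> gr (1 - int n)"
      unfolding X_def XX_def
      using xg x'g gr_diff[OF dg ug gr_one[OF dg]] gr_diff[OF dg vg gr_one[OF dg]]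
        gr_neg[OF dg \<eta>g] gr_neg[OF dg \<eta>'g] gr_zero[OF dg]
      by auto
  next
    fix n s assume "\<not> nondeg_K2 n s"
    then show "X n s = 0" using nondeg_six unfolding X_def XX_def by auto
  next
    fix n s assume "(n, s) \<in> K2"
    then show "tensor_diff_deg1 d X n s + tensor_square_deg1 X n s = 0"
      unfolding X_def
    proof (rule Tw_K2[OF d_zero[OF dg] _ hx hx'])
      show "d (v - 1) = x' - x - x * (v - 1) + (v - 1) * x'"
        by (simp add: d_diff[OF dg] d_one[OF dg] dv algebra_simps)
      show "d (u - 1) = x - x' - x' * (u - 1) + (u - 1) * x"
        by (simp add: d_diff[OF dg] d_one[OF dg] du algebra_simps)
      show "d (- \<eta>) = - (u - 1) - (v - 1) - x * - \<eta> - - \<eta> * x - (v - 1) * (u - 1)"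
        by (simp add: d_neg[OF dg] d\<eta> algebra_simps)
      show "d (- \<eta>') = - (v - 1) - (u - 1) - x' * - \<eta>' - - \<eta>' * x' - (u - 1) * (v - 1)"
        by (simp add: d_neg[OF dg] d\<eta>' algebra_simps)
    qed
  qed
  moreover have "X 0 (vertex_at 0) = x" "X 0 (vertex_at 1) = x'"
    using v01 by (simp_all add: X_def XX_def)
  ultimately show "K2_homotopic gr d x x'" unfolding K2_homotopic_def by blast
next
  note dg = assms(1)
  assume "K2_homotopic gr d x x'"
  then obtain X where MC: "K2_maurer_cartan gr d X" and v0: "X 0 (vertex_at 0) = x"
    and v1: "X 0 (vertex_at 1) = x'"
    unfolding K2_homotopic_def by blast
  have coch: "\<And>n s. X n s \<in> gr (1 - int n)" "\<And>n s. \<not> nondeg_K2 n s \<Longrightarrow> X n s = 0"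
    using MC unfolding K2_maurer_cartan_def K2_cochain_deg1_def by auto
  have eq: "\<forall>n s. (n,s) \<in> K2 \<longrightarrow> tensor_diff_deg1 d X n s + tensor_square_deg1 X n s = 0"
    using MC unfolding K2_maurer_cartan_def by auto
  have e00: "X 1 (edge 0 0) = 0" and e11: "X 1 (edge 1 1) = 0"
    using coch(2) edge_deg unfolding nondeg_K2_def by auto
  note E = dir1_eqs[OF eq v0 v1 e00 e11]
  define a01 where "a01 = X 1 (edge 0 1)"
  define a10 where "a10 = X 1 (edge 1 0)"
  define b where "b = X 2 (tri 0 1 0)"
  define b' where "b' = X 2 (tri 1 0 1)"
  have a01g: "a01 \<in> gr 0" and a10g: "a10 \<in> gr 0" using coch(1)[of 1] unfolding a01_def a10_def by auto
  have bg: "b \<in> gr (-1)" and b'g: "b' \<in> gr (-1)" using coch(1)[of 2] unfolding b_def b'_def by auto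
  define u where "u = 1 + a10"
  define v where "v = 1 + a01"
  have ug: "u \<in> gr 0" unfolding u_def by (rule gr_add[OF dg gr_one[OF dg] a10g])
  have vg: "v \<in> gr 0" unfolding v_def by (rule gr_add[OF dg gr_one[OF dg] a01g])
  have nbg: "- b \<in> gr (-1)" by (rule gr_neg[OF dg bg])
  have nb'g: "- b' \<in> gr (-1)" by (rule gr_neg[OF dg b'g])
  have du: "d u = x - x' - x' * a10 + a10 * x"
    unfolding u_def a10_def using E(2) by (simp add: d_add[OF dg] d_one[OF dg])
  have dv: "d v = x' - x - x * a01 + a01 * x'"
    unfolding v_def a01_def using E(1) by (simp add: d_add[OF dg] d_one[OF dg])
  have db: "d b = - a10 - a01 - x * b - b * x - a01 * a10"
    unfolding b_def a01_def a10_def using E(3) by simp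
  have db': "d b' = - a01 - a10 - x' * b' - b' * x' - a10 * a01"
    unfolding b'_def a01_def a10_def using E(4) by simp
  show "homotopy_gauge_equiv smult gr d x x'"
    unfolding homotopy_gauge_equiv_def
  proof (intro exI conjI)
    show "closed_module_map smult gr d x x' (\<lambda>a. u * a)"
      unfolding closed_module_map_def
    proof (intro conjI allI)
      show "module_map_deg smult gr 0 (\<lambda>a. u * a)" by (rule left_mult_map[OF dg ug])
      fix a
      show "twisted_diff d x' (u * a) = u * twisted_diff d x a"
        using leib[OF dg ug, of a]
        by (simp add: twisted_diff_def sgn_mult_def du[unfolded u_def] u_def algebra_simps)
    qed
    show "closed_module_map smult gr d x' x (\<lambda>a. v * a)"
      unfolding closed_module_map_def
    proof (intro conjI allI)
      show "module_map_deg smult gr 0 (\<lambda>a. v * a)" by (rule left_mult_map[OF dg vg])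
      fix a
      show "twisted_diff d x (v * a) = v * twisted_diff d x' a"
        using leib[OF dg vg, of a]
        by (simp add: twisted_diff_def sgn_mult_def dv[unfolded v_def] v_def algebra_simps)
    qed
    show "cohomologous_to_id smult gr d x ((\<lambda>a. v * a) \<circ> (\<lambda>a. u * a))"
      unfolding cohomologous_to_id_def
    proof (intro exI conjI allI)
      show "module_map_deg smult gr (-1) (\<lambda>a. - b * a)" by (rule left_mult_map[OF dg nbg])
      fix a
      show "((\<lambda>a. v * a) \<circ> (\<lambda>a. u * a)) a - a = twisted_diff d x (- b * a) + - b * twisted_diff d x a"
        using leib[OF dg nbg, of a]
        by (simp add: twisted_diff_def sgn_mult_def d_neg[OF dg] db u_def v_def algebra_simps)
    qed
    show "cohomologous_to_id smult gr d x' ((\<lambda>a. u * a) \<circ> (\<lambda>a. v * a))"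
      unfolding cohomologous_to_id_def
    proof (intro exI conjI allI)
      show "module_map_deg smult gr (-1) (\<lambda>a. - b' * a)" by (rule left_mult_map[OF dg nb'g])
      fix a
      show "((\<lambda>a. u * a) \<circ> (\<lambda>a. v * a)) a - a = twisted_diff d x' (- b' * a) + - b' * twisted_diff d x' a"
        using leib[OF dg nb'g, of a]
        by (simp add: twisted_diff_def sgn_mult_def d_neg[OF dg] db' u_def v_def algebra_simps)
    qed
  qed
qed


end
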